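(* Fix $x_0\in(-2,2)$ and $0<\alpha<1$. Let $N\in\mathbb{N}$, $\eta_1,\dots,\eta_N\in\mathbb{C}$ with $\operatorname{Im}\eta_j>0$, $c_1,\dots,c_N\in\mathbb{R}$, $\lambda_j=x_0+\eta_j/n^\alpha$ and $\phi^{(n)}=\frac{1}{n^\alpha}\sum_{j=1}^Nc_ja_{\lambda_j}$. Then $$\lim_{n\to\infty}\operatorname{Tr}H(\phi^{(n)})H(\tilde\phi^{(n)})=-\frac12\sum_{i,j=1}^Nc_ic_j\operatorname{Re}\frac{1}{(\eta_i-\overline{\eta_j})^2},$$ uniformly for $c_j$ in compact subsets of $\mathbb{R}$ and $\eta_j$ in compact subsets of the upper half-plane.
   Context: $\omega(\lambda)=\frac{\lambda-\sqrt{\lambda^2-4}}{2}$ on $\mathbb{C}\setminus[-2,2]$, branch analytic there with $\omega(\lambda)=O(1/\lambda)$ at infinity. For $\operatorname{Im}\lambda>0$, $a_\lambda(z)=\sum_{j\in\mathbb{Z}}\operatorname{Im}\left(\frac{\omega(\lambda)^{|j|}}{\omega(\lambda)-\omega(\lambda)^{-1}}\right)z^j$. For a Laurent series $\phi=\sum\phi_kz^k$, $H(\phi)_{j,k}=\phi_{j+k-1}$ ($j,k\ge1$) is the Hankel matrix and $\tilde\phi(z)=\phi(1/z)$. *)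

theory Defs
  imports "HOL-Analysis.Analysis"
begin

text \<open>omega(lambda) = (lambda - sqrt(lambda^2-4))/2, with the branch of the square root
  analytic on C minus [-2,2] and asymptotic to lambda at infinity:
  sqrt(lambda^2-4) = csqrt(lambda-2) * csqrt(lambda+2).\<close>
definition omega :: "complex \<Rightarrow> complex" where
  "omega l = (l - csqrt (l - 2) * csqrt (l + 2)) / 2"

text \<open>Laurent coefficients of a_lambda(z) = sum_j Im(omega^|j| / (omega - omega^-1)) z^j.\<close>
definition a_coeff :: "complex \<Rightarrow> int \<Rightarrow> real" where
  "a_coeff l j = Im (omega l ^ nat \<bar>j\<bar> / (omega l - inverse (omega l)))"

text \<open>Hankel matrix H(phi)_{j,k} = phi_{j+k-1}, j,k >= 1; here indexed 0-based:
  entry (j,k) with j,k :: nat corresponds to (j+1,k+1).\<close>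
definition hankel :: "(int \<Rightarrow> real) \<Rightarrow> nat \<Rightarrow> nat \<Rightarrow> real" where
  "hankel phi j k = phi (int j + int k + 1)"

definition tilde :: "(int \<Rightarrow> real) \<Rightarrow> int \<Rightarrow> real" where
  "tilde phi k = phi (- k)"

definition trace_HH :: "(int \<Rightarrow> real) \<Rightarrow> (int \<Rightarrow> real) \<Rightarrow> real" where
  "trace_HH phi psi = (\<Sum>j. \<Sum>k. hankel phi j k * hankel psi k j)"

definition phi_n :: "real \<Rightarrow> real \<Rightarrow> nat \<Rightarrow> (nat \<Rightarrow> real) \<Rightarrow> (nat \<Rightarrow> complex) \<Rightarrow> nat \<Rightarrow> int \<Rightarrow> real" where
  "phi_n x0 \<alpha> N c \<eta> n k =
     (1 / real n powr \<alpha>) * (\<Sum>j<N. c j * a_coeff (complex_of_real x0 + \<eta> j / complex_of_real (real n powr \<alpha>)) k)"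

end

theory Submission
  imports Defs
begin


definition S :: "complex \<Rightarrow> complex" where "S l = csqrt (2 - l) * csqrt (2 + l)"
definition W :: "complex \<Rightarrow> complex" where "W l = (l - \<i> * S l) / 2"

lemma Im_sq: "Im (w^2) = 2 * Re w * Im w" by (simp add: power2_eq_square)

lemma sqrt_parts_aux:
  fixes w z :: complex
  assumes "w^2 = z" "Re w \<ge> 0" "Im z \<noteq> 0"
  shows "Re w > 0" "Im z = 2 * Re w * Im w"
proof -
  have e: "Im z = 2 * Re w * Im w" using assms(1) Im_sq[of w] by simp
  then show "Im z = 2 * Re w * Im w" .
  show "Re w > 0" using e assms(2,3) by (cases "Re w = 0") auto
qed

lemma csqrt_pos_parts: assumes "Im z > 0" shows "Re (csqrt z) > 0" "Im (csqrt z) > 0"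
proof -
  obtain w where w: "w = csqrt z" by blast
  have "w^2 = z" "Re w \<ge> 0" using w Re_csqrt by auto
  note h = sqrt_parts_aux[OF this, of ] 
  have 1: "Re w > 0" and 2: "Im z = 2 * Re w * Im w" using h assms by auto
  have "Im w > 0" using 1 2 assms by (simp add: zero_less_mult_iff)
  then show "Re (csqrt z) > 0" "Im (csqrt z) > 0" using 1 w by auto
qed

lemma csqrt_neg_parts: assumes "Im z < 0" shows "Re (csqrt z) > 0" "Im (csqrt z) < 0"
proof -
  obtain w where w: "w = csqrt z" by blast
  have "w^2 = z" "Re w \<ge> 0" using w Re_csqrt by auto
  note h = sqrt_parts_aux[OF this, of ] 
  have 1: "Re w > 0" and 2: "Im z = 2 * Re w * Im w" using h assms by auto
  have "Im w < 0" using 1 2 assms by (simp add: mult_less_0_iff)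
  then show "Re (csqrt z) > 0" "Im (csqrt z) < 0" using 1 w by auto
qed

lemma csqrt_flip: assumes "Im l > 0" shows "csqrt (l - 2) = \<i> * csqrt (2 - l)"
proof (rule csqrt_unique)
  show "(\<i> * csqrt (2 - l))\<^sup>2 = l - 2" by (simp add: power_mult_distrib)
  have "Im (2 - l) < 0" using assms by simp
  then have "Im (csqrt (2 - l)) < 0" by (rule csqrt_neg_parts)
  then show "0 < Re (\<i> * csqrt (2 - l)) \<or> Re (\<i> * csqrt (2 - l)) = 0 \<and> 0 \<le> Im (\<i> * csqrt (2 - l))"
    by simp
qed

lemma sq_eq: assumes "Im l > 0" shows "csqrt (l - 2) * csqrt (l + 2) = \<i> * S l"
proof -
  have "csqrt (2 + l) = csqrt (l + 2)" by (simp add: add.commute)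
  then show ?thesis using csqrt_flip[OF assms] by (simp add: S_def)
qed

lemma omega_W: "Im l > 0 \<Longrightarrow> omega l = W l"
  using sq_eq by (simp add: omega_def W_def)

lemma key_ineq:
  fixes p q :: complex
  assumes "Re p > 0" "Im p > 0" "Re q > 0" "Im q > 0"
  shows "Re (((p^2 + q^2)/2) * cnj (p*q)) > 0"
proof -
  have e: "Re (((p^2 + q^2)/2) * cnj (p*q)) = (Re p^2 + Im p^2 + Re q^2 + Im q^2) * (Re p * Re q + Im p * Im q) / 2"
    by (simp add: power2_eq_square algebra_simps)
  show ?thesis unfolding e using assms by (intro divide_pos_pos mult_pos_pos) (auto intro: add_pos_pos add_nonneg_pos)
qed

lemma W_props: assumes "Im l > 0"
  shows "cmod (W l) < 1" "W l \<noteq> 0" "inverse (W l) = (l + \<i> * S l)/2" "S l \<noteq> 0"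
proof -
  define p where "p = csqrt (l - 2)"
  define q where "q = csqrt (l + 2)"
  define s where "s = \<i> * S l"
  have s: "s = p * q" using sq_eq[OF assms] by (simp add: s_def p_def q_def)
  have pq: "Re p > 0" "Im p > 0" "Re q > 0" "Im q > 0" 
    using assms csqrt_pos_parts[of "l-2"] csqrt_pos_parts[of "l+2"] unfolding p_def q_def by auto
  have lam: "l = (p^2 + q^2)/2" by (simp add: p_def q_def)
  have "s^2 = p^2 * q^2" by (simp add: s power_mult_distrib)
  moreover have "p^2 = l-2" "q^2 = l+2" by (simp_all add: p_def q_def)
  ultimately have "s^2 = (l-2)*(l+2)" by simp
  then have ss: "s^2 = l^2 - 4" by (simp add: power2_eq_square algebra_simps)
  have prod: "((l - s)/2) * ((l + s)/2) = 1" using ss by (simp add: power2_eq_square field_simps)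
  have W: "W l = (l - s)/2" by (simp add: W_def s_def)
  show "W l \<noteq> 0" using prod W by auto
  show "inverse (W l) = (l + \<i> * S l)/2" using prod W s_def by (metis inverse_unique)
  show "S l \<noteq> 0"
  proof
    assume "S l = 0"
    then have "p * q = 0" using s s_def by simp
    then show False using pq by auto
  qed
  have pos: "Re (l * cnj s) > 0" using key_ineq[OF pq] unfolding lam[symmetric] s[symmetric] .
  have diff: "(cmod (l + s))^2 - (cmod (l - s))^2 = 4 * Re (l * cnj s)"
    unfolding cmod_power2 by (simp add: power2_eq_square algebra_simps)
  have "(l - s) * (l + s) = 4" using prod by (simp add: field_simps)
  then have m: "cmod (l - s) * cmod (l + s) = 4" by (metis norm_mult norm_numeral)
  have "(cmod (l - s))^2 < (cmod (l + s))^2" using diff pos by simp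
  then have lt: "cmod (l - s) < cmod (l + s)" by (rule power2_less_imp_less) simp
  have "cmod (l - s) < 2"
  proof (rule ccontr)
    assume a: "\<not> cmod (l - s) < 2"
    then have "2 * cmod (l + s) \<le> cmod (l-s) * cmod (l+s)" by (intro mult_right_mono) auto
    moreover have "2 * 2 < 2 * cmod (l + s)" using a lt by simp
    ultimately show False using m by simp
  qed
  then show "cmod (W l) < 1" unfolding W by (simp add: norm_divide)
qed

lemma a_coeff_eq: assumes "Im l > 0"
  shows "a_coeff l k = Re (W l ^ nat \<bar>k\<bar> / S l)"
proof -
  have "W l - inverse (W l) = - \<i> * S l" using W_props[OF assms] by (simp add: W_def field_simps)
  then have "a_coeff l k = Im (W l ^ nat \<bar>k\<bar> / (- \<i> * S l))" by (simp add: a_coeff_def omega_W[OF assms])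
  also have "W l ^ nat \<bar>k\<bar> / (- \<i> * S l) = \<i> * (W l ^ nat \<bar>k\<bar> / S l)"
    using W_props(4)[OF assms] by (simp add: field_simps)
  also have "Im (\<i> * (W l ^ nat \<bar>k\<bar> / S l)) = Re (W l ^ nat \<bar>k\<bar> / S l)" by (rule Im_i_times)
  finally show ?thesis .
qed



lemma geo_inner: fixes z :: complex assumes "norm z < 1"
  shows "(\<lambda>k. z^(j+k+1)) sums (z^(j+1)/(1-z))"
proof -
  have "(\<lambda>k. z^(j+1) * z^k) sums (z^(j+1) * (1/(1-z)))"
    by (intro sums_mult geometric_sums assms)
  then show ?thesis by (simp add: power_add mult_ac)
qed

lemma geo_outer: fixes z :: complex assumes "norm z < 1"
  shows "(\<lambda>j. z^(j+1)/(1-z)) sums (z/(1-z)^2)"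
proof -
  have "(\<lambda>j. (z/(1-z)) * z^j) sums ((z/(1-z)) * (1/(1-z)))"
    by (intro sums_mult geometric_sums assms)
  then show ?thesis by (simp add: power2_eq_square mult_ac)
qed

lemma dsum_lemma:
  fixes P R z w :: "'a \<Rightarrow> complex"
  assumes "\<And>p. p \<in> A \<Longrightarrow> norm (z p) < 1" "\<And>p. p \<in> A \<Longrightarrow> norm (w p) < 1"
  shows "(\<Sum>j. \<Sum>k. \<Sum>p\<in>A. Re (P p * z p ^ (j+k+1)) + Re (R p * w p ^ (j+k+1)))
       = (\<Sum>p\<in>A. Re (P p * (z p / (1 - z p)^2)) + Re (R p * (w p / (1 - w p)^2)))"
proof -
  have inner: "(\<lambda>k. \<Sum>p\<in>A. Re (P p * z p ^ (j+k+1)) + Re (R p * w p ^ (j+k+1))) sums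
     (\<Sum>p\<in>A. Re (P p * (z p^(j+1)/(1-z p))) + Re (R p * (w p^(j+1)/(1-w p))))" for j
    by (intro sums_sum sums_add sums_Re sums_mult geo_inner assms)
  have outer: "(\<lambda>j. \<Sum>p\<in>A. Re (P p * (z p^(j+1)/(1-z p))) + Re (R p * (w p^(j+1)/(1-w p)))) sums
     (\<Sum>p\<in>A. Re (P p * (z p / (1 - z p)^2)) + Re (R p * (w p / (1 - w p)^2)))"
    by (intro sums_sum sums_add sums_Re sums_mult geo_outer assms)
  have "(\<lambda>j. \<Sum>k. \<Sum>p\<in>A. Re (P p * z p ^ (j+k+1)) + Re (R p * w p ^ (j+k+1))) =
     (\<lambda>j. \<Sum>p\<in>A. Re (P p * (z p^(j+1)/(1-z p))) + Re (R p * (w p^(j+1)/(1-w p))))"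
    using inner by (intro ext) (rule sums_unique[symmetric])
  then show ?thesis by (simp only:) (rule sums_unique[OF outer, symmetric])
qed

lemma Re_Re: fixes x y :: complex shows "Re x * Re y = (Re (x * cnj y) + Re (x * y)) / 2"
  by (simp add: algebra_simps)



definition L :: "real \<Rightarrow> real \<Rightarrow> complex \<Rightarrow> complex" where
  "L x0 t a = of_real x0 + of_real t * a"
definition Wd :: "real \<Rightarrow> complex" where "Wd x0 = \<i> * W (of_real x0) / S (of_real x0)"
definition Q :: "real \<Rightarrow> complex \<Rightarrow> complex" where
  "Q x0 h = (if h = 0 then Wd x0 else (W (of_real x0 + h) - W (of_real x0)) / h)"
definition Dd :: "real \<Rightarrow> real \<Rightarrow> complex \<Rightarrow> complex \<Rightarrow> complex" where
  "Dd x0 t a b = - (a * Q x0 (of_real t * a) * cnj (W (L x0 t b)) + W (of_real x0) * cnj (b * Q x0 (of_real t * b)))"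
definition Phi :: "real \<Rightarrow> real \<Rightarrow> complex \<Rightarrow> complex \<Rightarrow> real" where
  "Phi x0 t a b = Re (W (L x0 t a) * cnj (W (L x0 t b)) / (S (L x0 t a) * cnj (S (L x0 t b)) * (Dd x0 t a b)^2)
      + of_real (t^2) * (W (L x0 t a) * W (L x0 t b)) / (S (L x0 t a) * S (L x0 t b) * (1 - W (L x0 t a) * W (L x0 t b))^2)) / 2"

lemma S0: assumes "-2 < x0" "x0 < 2" shows "S (of_real x0) = of_real (sqrt (2 - x0) * sqrt (2 + x0))"
proof -
  have "csqrt (2 - of_real x0) = of_real (sqrt (2 - x0))"
    using csqrt_of_real[of "2 - x0"] assms by simp
  moreover have "csqrt (2 + of_real x0) = of_real (sqrt (2 + x0))"
    using csqrt_of_real[of "2 + x0"] assms by simp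
  ultimately show ?thesis by (simp add: S_def)
qed

lemma W0_norm: assumes "-2 < x0" "x0 < 2" shows "W (of_real x0) * cnj (W (of_real x0)) = 1"
proof -
  define s where "s = sqrt (2 - x0) * sqrt (2 + x0)"
  have s2: "s^2 = 4 - x0^2" using assms by (simp add: s_def power_mult_distrib power2_eq_square algebra_simps)
  have "W (of_real x0) = (of_real x0 - \<i> * of_real s)/2" by (simp add: W_def S0[OF assms] s_def)
  then have "W (of_real x0) * cnj (W (of_real x0)) = of_real ((x0^2 + s^2)/4)"
    unfolding \<open>W (of_real x0) = _\<close> by (simp add: complex_eq_iff power2_eq_square algebra_simps)
  then show ?thesis using s2 by simp
qed

lemma Dd_eq: assumes "-2 < x0" "x0 < 2" "t > 0" "a \<noteq> 0" "b \<noteq> 0"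
  shows "Dd x0 t a b = (1 - W (L x0 t a) * cnj (W (L x0 t b))) / of_real t"
proof -
  have ta: "of_real t * a \<noteq> 0" and tb: "of_real t * b \<noteq> 0" using assms by auto
  have n1: "W (of_real x0) * cnj (W (of_real x0)) = 1" by (rule W0_norm[OF assms(1,2)])
  have "Dd x0 t a b = - ((W (L x0 t a) - W (of_real x0)) / of_real t * cnj (W (L x0 t b))
          + W (of_real x0) * cnj ((W (L x0 t b) - W (of_real x0)) / of_real t))"
    unfolding Dd_def Q_def using ta tb assms by (simp add: L_def field_simps)
  also have "\<dots> = (W (of_real x0) * cnj (W (of_real x0)) - W (L x0 t a) * cnj (W (L x0 t b))) / of_real t"
    using assms by (simp add: field_simps)
  finally show ?thesis using n1 by simp
qed

lemma Re_Re': fixes x y :: complex shows "Re (x * cnj y) + Re (x * y) = 2 * (Re x * Re y)"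
  by (simp add: algebra_simps)

lemma Re_ofr: "Re (of_real r * w) = r * Re w" by simp

lemma Re_aux: "Re (of_real r / d * z) = r * Re (z / d)"
proof -
  have "of_real r / d * z = of_real r * (z / d)" by (simp add: divide_inverse mult_ac)
  then show ?thesis by (simp only: Re_ofr)
qed

lemma norm_prod_lt1: fixes a b :: complex assumes "norm a < 1" "norm b < 1" shows "norm a * norm b < 1"
proof -
  have "norm b * norm a \<le> norm a" by (rule mult_left_le_one_le) (use assms in auto)
  then show ?thesis using assms by (simp add: mult.commute)
qed

lemma trace_eq:
  assumes "-2 < x0" "x0 < 2" "n \<ge> 1" "\<forall>j<N. Im (\<eta> j) > 0"
  shows "trace_HH (phi_n x0 \<alpha> N c \<eta> n) (tilde (phi_n x0 \<alpha> N c \<eta> n))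
       = (\<Sum>i<N. \<Sum>j<N. c i * c j * Phi x0 (1 / real n powr \<alpha>) (\<eta> i) (\<eta> j))"
proof -
  define t where "t = 1 / real n powr \<alpha>"
  have t: "t > 0" using assms(3) by (simp add: t_def)
  define la where "la j = L x0 t (\<eta> j)" for j
  have Im_la: "Im (la j) > 0" if "j < N" for j
    using assms(4) that t by (simp add: la_def L_def)
  define phi where "phi = phi_n x0 \<alpha> N c \<eta> n"
  have phi: "phi k = t * (\<Sum>j<N. c j * Re (W (la j) ^ nat \<bar>k\<bar> / S (la j)))" for k
  proof -
    have "\<eta> j / complex_of_real (real n powr \<alpha>) = of_real t * \<eta> j" for j
      by (simp add: t_def field_simps)
    then have "phi k = t * (\<Sum>j<N. c j * a_coeff (la j) k)"
      by (simp add: phi_def phi_n_def la_def L_def t_def)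
    also have "\<dots> = t * (\<Sum>j<N. c j * Re (W (la j) ^ nat \<bar>k\<bar> / S (la j)))"
      using Im_la a_coeff_eq by (intro arg_cong[where f="\<lambda>x. t * x"] sum.cong) auto
    finally show ?thesis .
  qed
  define A where "A = {..<N} \<times> {..<N}"
  define P where "P = (\<lambda>(i,j). of_real (t^2 * c i * c j / 2) / (S (la i) * cnj (S (la j))))"
  define R where "R = (\<lambda>(i,j). of_real (t^2 * c i * c j / 2) / (S (la i) * S (la j)))"
  define zz where "zz = (\<lambda>(i,j). W (la i) * cnj (W (la j)))"
  define ww where "ww = (\<lambda>(i,j). W (la i) * W (la j))"
  have trm: "hankel phi j k * hankel (tilde phi) k j
      = (\<Sum>p\<in>A. Re (P p * zz p ^ (j+k+1)) + Re (R p * ww p ^ (j+k+1)))" for j k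
  proof -
    define m where "m = j + k + 1"
    define xx where "xx i = W (la i) ^ m / S (la i)" for i
    have n1: "nat \<bar>int j + int k + 1\<bar> = m" unfolding m_def by arith
    have n2: "nat \<bar>- (int k + int j + 1)\<bar> = m" unfolding m_def by arith
    have h1: "hankel phi j k = t * (\<Sum>i<N. c i * Re (xx i))"
      unfolding hankel_def phi xx_def n1 ..
    have h2: "hankel (tilde phi) k j = t * (\<Sum>i<N. c i * Re (xx i))"
      unfolding hankel_def tilde_def phi xx_def n2 ..
    have "hankel phi j k * hankel (tilde phi) k j = (\<Sum>i<N. \<Sum>l<N. (t * (c i * Re (xx i))) * (t * (c l * Re (xx l))))"
      unfolding h1 h2 sum_distrib_left[of t] sum_product by (rule refl)
    also have "\<dots> = (\<Sum>i<N. \<Sum>l<N. Re (P (i,l) * zz (i,l) ^ m) + Re (R (i,l) * ww (i,l) ^ m))"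
    proof (intro sum.cong refl)
      fix i l
      have e1: "xx i * cnj (xx l) = zz (i,l) ^ m / (S (la i) * cnj (S (la l)))"
        by (simp add: xx_def zz_def power_mult_distrib)
      have e2: "xx i * xx l = ww (i,l) ^ m / (S (la i) * S (la l))"
        by (simp add: xx_def ww_def power_mult_distrib)
      have rr: "Re (xx i * cnj (xx l)) + Re (xx i * xx l) = 2 * (Re (xx i) * Re (xx l))"
        by (rule Re_Re')
      have "(t * (c i * Re (xx i))) * (t * (c l * Re (xx l))) = (t^2 * c i * c l / 2) * (Re (xx i * cnj (xx l)) + Re (xx i * xx l))"
        unfolding rr by (simp add: power2_eq_square)
      also have "\<dots> = Re (P (i,l) * zz (i,l) ^ m) + Re (R (i,l) * ww (i,l) ^ m)"
        unfolding e1 e2 P_def R_def by (simp only: case_prod_conv Re_aux distrib_left)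
      finally show "(t * (c i * Re (xx i))) * (t * (c l * Re (xx l))) = Re (P (i,l) * zz (i,l) ^ m) + Re (R (i,l) * ww (i,l) ^ m)" .
    qed
    also have "\<dots> = (\<Sum>p\<in>A. Re (P p * zz p ^ m) + Re (R p * ww p ^ m))"
      unfolding A_def sum.cartesian_product by (simp add: case_prod_beta')
    finally show ?thesis by (simp add: m_def)
  qed
  have nz: "norm (zz p) < 1" "norm (ww p) < 1" if pA: "p \<in> A" for p
  proof -
    obtain i l where p: "p = (i,l)" "i < N" "l < N" using pA A_def by auto
    have "norm (W (la i)) < 1" "norm (W (la l)) < 1" using W_props(1) Im_la p by auto
    then have "norm (W (la i)) * norm (W (la l)) < 1" by (rule norm_prod_lt1)
    then show "norm (zz p) < 1" "norm (ww p) < 1" by (simp_all add: zz_def ww_def p norm_mult)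
  qed
  have "trace_HH phi (tilde phi) = (\<Sum>j. \<Sum>k. \<Sum>p\<in>A. Re (P p * zz p ^ (j+k+1)) + Re (R p * ww p ^ (j+k+1)))"
    unfolding trace_HH_def trm ..
  also have "\<dots> = (\<Sum>p\<in>A. Re (P p * (zz p / (1 - zz p)^2)) + Re (R p * (ww p / (1 - ww p)^2)))"
    by (rule dsum_lemma) (use nz in auto)
  also have "\<dots> = (\<Sum>p\<in>A. c (fst p) * c (snd p) * Phi x0 t (\<eta> (fst p)) (\<eta> (snd p)))"
  proof (intro sum.cong refl)
    fix p assume "p \<in> A"
    then obtain i l where p: "p = (i,l)" "i < N" "l < N" using A_def by auto
    have nz0: "\<eta> i \<noteq> 0" "\<eta> l \<noteq> 0" using assms(4) p by auto
    have D: "Dd x0 t (\<eta> i) (\<eta> l) = (1 - zz p) / of_real t"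
      using Dd_eq[OF assms(1,2) t nz0] by (simp add: zz_def p la_def)
    define X where "X = zz p / (S (la i) * cnj (S (la l)) * (Dd x0 t (\<eta> i) (\<eta> l))^2)"
    define Y where "Y = of_real (t^2) * ww p / (S (la i) * S (la l) * (1 - ww p)^2)"
    have ph: "Phi x0 t (\<eta> i) (\<eta> l) = Re (X + Y) / 2"
      by (simp add: Phi_def X_def Y_def zz_def ww_def p la_def)
    have Sn: "S (la i) \<noteq> 0" "S (la l) \<noteq> 0" using W_props(4) Im_la p by auto
    have zn: "1 - zz p \<noteq> 0" "1 - ww p \<noteq> 0" using nz[OF \<open>p \<in> A\<close>] by auto
    have tn: "(of_real t :: complex) \<noteq> 0" using t by simp
    have e3: "P p * (zz p / (1 - zz p)^2) = of_real (c i * c l / 2) * X"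
      unfolding X_def D P_def p using Sn zn tn by (simp add: field_simps power2_eq_square)
    have e4: "R p * (ww p / (1 - ww p)^2) = of_real (c i * c l / 2) * Y"
      unfolding Y_def R_def p using Sn zn tn by (simp add: field_simps power2_eq_square)
    have e5: "Re (P p * (zz p / (1 - zz p)^2)) + Re (R p * (ww p / (1 - ww p)^2)) = (c i * c l / 2) * (Re X + Re Y)"
      unfolding e3 e4 Re_ofr by (simp only: distrib_left)
    show "Re (P p * (zz p / (1 - zz p)^2)) + Re (R p * (ww p / (1 - ww p)^2)) = c (fst p) * c (snd p) * Phi x0 t (\<eta> (fst p)) (\<eta> (snd p))"
      by (rule trans[OF e5]) (simp add: ph p)
  qed
  also have "\<dots> = (\<Sum>i<N. \<Sum>j<N. c i * c j * Phi x0 t (\<eta> i) (\<eta> j))"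
    unfolding A_def sum.cartesian_product by (simp add: case_prod_beta')
  finally show ?thesis by (simp add: phi_def t_def)
qed



lemma S_fun: "S = (\<lambda>l. csqrt (2 - l) * csqrt (2 + l))" by (rule ext) (simp add: S_def)
lemma W_fun: "W = (\<lambda>l. (l - \<i> * S l) / 2)" by (rule ext) (simp add: W_def)

lemma good_ok: assumes "-2 < x0" "x0 < 2" "Im l > 0 \<or> l = of_real x0"
  shows "2 - l \<notin> \<real>\<^sub>\<le>\<^sub>0" "2 + l \<notin> \<real>\<^sub>\<le>\<^sub>0"
  using assms by (auto simp: complex_nonpos_Reals_iff)

lemma S_isCont: assumes "-2 < x0" "x0 < 2" "Im l > 0 \<or> l = of_real x0" shows "isCont S l"
  unfolding S_fun using good_ok[OF assms] by (intro continuous_intros isCont_csqrt') auto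

lemma W_isCont: assumes "-2 < x0" "x0 < 2" "Im l > 0 \<or> l = of_real x0" shows "isCont W l"
  unfolding W_fun using S_isCont[OF assms] by (intro continuous_intros) auto

lemma W_deriv: assumes "-2 < x0" "x0 < 2" shows "(W has_field_derivative Wd x0) (at (of_real x0))"
proof -
  define u where "u = sqrt (2 - x0)"
  define v where "v = sqrt (2 + x0)"
  have u: "u > 0" "u^2 = 2 - x0" using assms by (auto simp: u_def)
  have v: "v > 0" "v^2 = 2 + x0" using assms by (auto simp: v_def)
  have cu: "csqrt (2 - of_real x0) = of_real u"
    using csqrt_of_real[of "2 - x0"] assms by (simp add: u_def)
  have cv: "csqrt (2 + of_real x0) = of_real v"
    using csqrt_of_real[of "2 + x0"] assms by (simp add: v_def)
  note g = good_ok[OF assms, of "of_real x0", simplified]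
  have dS: "(S has_field_derivative ((-1) / (2 * csqrt (2 - of_real x0)) * csqrt (2 + of_real x0)
             + csqrt (2 - of_real x0) * (1 / (2 * csqrt (2 + of_real x0))))) (at (of_real x0))"
    unfolding S_fun
    by (rule derivative_eq_intros refl | use g in simp)+
  have dW: "(W has_field_derivative ((1 - \<i> * ((-1) / (2 * csqrt (2 - of_real x0)) * csqrt (2 + of_real x0)
             + csqrt (2 - of_real x0) * (1 / (2 * csqrt (2 + of_real x0)))))/2)) (at (of_real x0))"
    unfolding W_fun by (rule derivative_eq_intros dS refl | simp)+
  have W0: "W (of_real x0) = (of_real x0 - \<i> * of_real (u * v)) / 2"
    by (simp add: W_def S_def cu cv)
  have S0: "S (of_real x0) = of_real (u * v)" by (simp add: S_def cu cv)
  have "(1 - \<i> * ((-1) / (2 * csqrt (2 - of_real x0)) * csqrt (2 + of_real x0)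
             + csqrt (2 - of_real x0) * (1 / (2 * csqrt (2 + of_real x0)))))/2 = Wd x0"
  proof -
    have e: "(-1) / (2 * u) * v + u * (1 / (2 * v)) = - x0 / (u * v)"
    proof -
      have uu: "x0 + u * u = 2" using u by (simp add: power2_eq_square)
      have "u * (v * x0) + u * (u * (u * v)) = u * (v * 2)"
      proof -
        have "u * (v * x0) + u * (u * (u * v)) = u * v * (x0 + u * u)" by (simp add: algebra_simps)
        then show ?thesis using uu by simp
      qed
      then show ?thesis using u v by (simp add: field_simps power2_eq_square)
    qed
    have "(1 - \<i> * ((-1) / (2 * csqrt (2 - of_real x0)) * csqrt (2 + of_real x0)
             + csqrt (2 - of_real x0) * (1 / (2 * csqrt (2 + of_real x0)))))/2
          = (1 - \<i> * of_real ((-1) / (2 * u) * v + u * (1 / (2 * v))))/2"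
      by (simp add: cu cv)
    also have "\<dots> = (1 + \<i> * of_real (x0 / (u * v)))/2" unfolding e by simp
    also have "\<dots> = Wd x0" unfolding Wd_def W0 S0 using u v
      by (simp add: field_simps complex_eq_iff power2_eq_square)
    finally show ?thesis .
  qed
  with dW show ?thesis by simp
qed



lemma W_comp: assumes "-2 < x0" "x0 < 2" "isCont f p" "Im (f p) > 0 \<or> f p = of_real x0"
  shows "isCont (\<lambda>x. W (f x)) p"
  by (rule isCont_o2[OF assms(3) W_isCont[OF assms(1,2,4)]])

lemma S_comp: assumes "-2 < x0" "x0 < 2" "isCont f p" "Im (f p) > 0 \<or> f p = of_real x0"
  shows "isCont (\<lambda>x. S (f x)) p"
  by (rule isCont_o2[OF assms(3) S_isCont[OF assms(1,2,4)]])

lemma Q_isCont: assumes "-2 < x0" "x0 < 2" "h = 0 \<or> Im h > 0" shows "isCont (Q x0) h"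
proof (cases "h = 0")
  case True
  have d: "((\<lambda>h. (W (of_real x0 + h) - W (of_real x0)) / h) \<longlongrightarrow> Wd x0) (at 0)"
    using W_deriv[OF assms(1,2)] unfolding DERIV_def .
  have ev: "eventually (\<lambda>y. (W (of_real x0 + y) - W (of_real x0)) / y = Q x0 y) (at (0::complex))"
    unfolding eventually_at_filter by (simp add: Q_def)
  have "(Q x0 \<longlongrightarrow> Wd x0) (at 0)" using d tendsto_cong[OF ev] by simp
  then show ?thesis using True by (simp add: continuous_at Q_def)
next
  case False
  then have Im: "Im h > 0" using assms(3) by auto
  define g where "g y = (W (of_real x0 + y) - W (of_real x0)) / y" for y
  have ev: "eventually (\<lambda>y. Q x0 y = g y) (nhds h)"
    using t1_space_nhds[OF False] by (rule eventually_mono) (simp add: Q_def g_def)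
  have cW: "isCont (\<lambda>y. W (of_real x0 + y)) h"
    by (rule W_comp[OF assms(1,2)]) (use Im in \<open>auto intro: continuous_intros\<close>)
  have "isCont g h" unfolding g_def using False
    by (intro continuous_intros cW) auto
  then show ?thesis using isCont_cong[OF ev] by simp
qed

lemma Q_comp: assumes "-2 < x0" "x0 < 2" "isCont f p" "f p = 0 \<or> Im (f p) > 0"
  shows "isCont (\<lambda>x. Q x0 (f x)) p"
  by (rule isCont_o2[OF assms(3) Q_isCont[OF assms(1,2,4)]])

lemma S0_props: assumes "-2 < x0" "x0 < 2"
  shows "S (of_real x0) \<noteq> 0" "cnj (S (of_real x0)) = S (of_real x0)"
  using S0[OF assms] assms by auto

lemma Dd0: assumes "-2 < x0" "x0 < 2"
  shows "Dd x0 0 a b = - (\<i> / S (of_real x0)) * (a - cnj b)"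
proof -
  have n1: "W (of_real x0) * cnj (W (of_real x0)) = 1" by (rule W0_norm[OF assms])
  note s = S0_props[OF assms]
  have "Dd x0 0 a b = - (a * (\<i> * W (of_real x0) / S (of_real x0)) * cnj (W (of_real x0))
        + W (of_real x0) * cnj (b * (\<i> * W (of_real x0) / S (of_real x0))))"
    by (simp add: Dd_def Q_def Wd_def L_def)
  also have "\<dots> = - (\<i> / S (of_real x0)) * (a * (W (of_real x0) * cnj (W (of_real x0)))
        - cnj b * (W (of_real x0) * cnj (W (of_real x0))))"
    using s by (simp add: field_simps)
  finally show ?thesis using n1 by simp
qed

lemma W0_sq: assumes "-2 < x0" "x0 < 2" shows "1 - W (of_real x0) * W (of_real x0) \<noteq> 0"
proof
  assume "1 - W (of_real x0) * W (of_real x0) = 0"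
  then have "(W (of_real x0) - 1) * (W (of_real x0) + 1) = 0" by (simp add: algebra_simps)
  then have "W (of_real x0) - 1 = 0 \<or> W (of_real x0) + 1 = 0" by (simp only: mult_eq_0_iff)
  then have "Im (W (of_real x0) - 1) = 0 \<or> Im (W (of_real x0) + 1) = 0"
  proof
    assume e: "W (of_real x0) - 1 = 0" show ?thesis unfolding e by simp
  next
    assume e: "W (of_real x0) + 1 = 0" show ?thesis unfolding e by simp
  qed
  then have "Im (W (of_real x0)) = 0" by simp
  moreover have "Im (W (of_real x0)) = - (sqrt (2 - x0) * sqrt (2 + x0)) / 2"
    by (simp add: W_def S0[OF assms])
  moreover have "sqrt (2 - x0) * sqrt (2 + x0) > 0" using assms by simp
  ultimately show False using assms by simp
qed

lemma Phi0: assumes "-2 < x0" "x0 < 2"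
  shows "Phi x0 0 a b = - (1/2) * Re (1 / (a - cnj b)^2)"
proof -
  note s = S0_props[OF assms]
  have n1: "W (of_real x0) * cnj (W (of_real x0)) = 1" by (rule W0_norm[OF assms])
  have "S (of_real x0) * cnj (S (of_real x0)) * (Dd x0 0 a b)^2 = - ((a - cnj b)^2)"
    unfolding Dd0[OF assms] s(2) using s(1) by (simp add: field_simps power2_eq_square)
  then have "Phi x0 0 a b = Re (1 / (- ((a - cnj b)^2))) / 2"
    unfolding Phi_def by (simp add: L_def n1)
  then show ?thesis by simp
qed



lemma nonzeros:
  assumes "-2 < x0" "x0 < 2" "0 \<le> t" "Im a > 0" "Im b > 0"
  shows "Im (L x0 t a) > 0 \<or> L x0 t a = of_real x0" "Im (L x0 t b) > 0 \<or> L x0 t b = of_real x0"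
    "of_real t * a = 0 \<or> Im (of_real t * a) > 0" "of_real t * b = 0 \<or> Im (of_real t * b) > 0"
    "S (L x0 t a) \<noteq> 0" "S (L x0 t b) \<noteq> 0" "Dd x0 t a b \<noteq> 0"
    "1 - W (L x0 t a) * W (L x0 t b) \<noteq> 0"
proof -
  have "(t = 0 \<and> L x0 t a = of_real x0 \<and> L x0 t b = of_real x0 \<and> of_real t * a = 0 \<and> of_real t * b = 0) \<or>
        (t > 0 \<and> Im (L x0 t a) > 0 \<and> Im (L x0 t b) > 0 \<and> Im (of_real t * a) > 0 \<and> Im (of_real t * b) > 0)"
    using assms by (cases "t = 0") (auto simp: L_def)
  note cs = this
  then show "Im (L x0 t a) > 0 \<or> L x0 t a = of_real x0" "Im (L x0 t b) > 0 \<or> L x0 t b = of_real x0"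
    "of_real t * a = 0 \<or> Im (of_real t * a) > 0" "of_real t * b = 0 \<or> Im (of_real t * b) > 0"
    by auto
  show "S (L x0 t a) \<noteq> 0" "S (L x0 t b) \<noteq> 0"
    using cs W_props(4) S0_props(1)[OF assms(1,2)] by auto
  show "Dd x0 t a b \<noteq> 0"
  proof (cases "t = 0")
    case True
    have "Im (a - cnj b) > 0" using assms by simp
    then have "a - cnj b \<noteq> 0" by auto
    then show ?thesis using True Dd0[OF assms(1,2)] S0_props(1)[OF assms(1,2)] by simp
  next
    case False
    then have t: "t > 0" using assms by simp
    have la: "Im (L x0 t a) > 0" "Im (L x0 t b) > 0" using t assms by (auto simp: L_def)
    have "norm (W (L x0 t a)) * norm (W (L x0 t b)) < 1"
      by (rule norm_prod_lt1) (use W_props(1) la in auto)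
    then have "W (L x0 t a) * cnj (W (L x0 t b)) \<noteq> 1"
    proof (intro notI)
      assume lt: "norm (W (L x0 t a)) * norm (W (L x0 t b)) < 1" and e: "W (L x0 t a) * cnj (W (L x0 t b)) = 1"
      have "norm (W (L x0 t a) * cnj (W (L x0 t b))) = 1" by (simp only: e norm_one)
      then show False using lt by (simp add: norm_mult)
    qed
    moreover have "a \<noteq> 0" "b \<noteq> 0" using assms by auto
    ultimately show ?thesis using Dd_eq[OF assms(1,2) t] t by auto
  qed
  show "1 - W (L x0 t a) * W (L x0 t b) \<noteq> 0"
  proof (cases "t = 0")
    case True
    then show ?thesis using W0_sq[OF assms(1,2)] by (simp add: L_def)
  next
    case False
    then have t: "t > 0" using assms by simp
    have la: "Im (L x0 t a) > 0" "Im (L x0 t b) > 0" using t assms by (auto simp: L_def)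
    have "norm (W (L x0 t a)) * norm (W (L x0 t b)) < 1"
      by (rule norm_prod_lt1) (use W_props(1) la in auto)
    then show ?thesis
    proof (intro notI)
      assume lt: "norm (W (L x0 t a)) * norm (W (L x0 t b)) < 1" and "1 - W (L x0 t a) * W (L x0 t b) = 0"
      then have e: "W (L x0 t a) * W (L x0 t b) = 1" by simp
      have "norm (W (L x0 t a) * W (L x0 t b)) = 1" by (simp only: e norm_one)
      then show False using lt by (simp add: norm_mult)
    qed
  qed
qed

lemma L_cont: "isCont f p \<Longrightarrow> isCont g p \<Longrightarrow> isCont (\<lambda>x. L x0 (f x) (g x)) p"
  unfolding L_def by (intro continuous_intros)

lemma Psi_cont:
  assumes "-2 < x0" "x0 < 2" "K \<subseteq> {z. 0 < Im z}"
  shows "continuous_on ({0..1} \<times> (K \<times> K)) (\<lambda>p. Phi x0 (fst p) (fst (snd p)) (snd (snd p)))"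
proof (rule continuous_at_imp_continuous_on, rule ballI)
  fix p assume "p \<in> {0..1::real} \<times> (K \<times> K)"
  then obtain t a b where p0: "p = (t,a,b)" "0 \<le> t" "a \<in> K" "b \<in> K" by auto
  then have p: "p = (t,a,b)" "0 \<le> t" "Im a > 0" "Im b > 0" using assms(3) by auto
  note nz = nonzeros[OF assms(1,2) p(2-4)]
  have cfa: "isCont (\<lambda>p. L x0 (fst p) (fst (snd p))) p" by (intro L_cont continuous_intros)
  have cfb: "isCont (\<lambda>p. L x0 (fst p) (snd (snd p))) p" by (intro L_cont continuous_intros)
  have cWa: "isCont (\<lambda>p. W (L x0 (fst p) (fst (snd p)))) p" by (rule W_comp[OF assms(1,2) cfa]) (use nz p in simp)
  have cWb: "isCont (\<lambda>p. W (L x0 (fst p) (snd (snd p)))) p" by (rule W_comp[OF assms(1,2) cfb]) (use nz p in simp)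
  have cSa: "isCont (\<lambda>p. S (L x0 (fst p) (fst (snd p)))) p" by (rule S_comp[OF assms(1,2) cfa]) (use nz p in simp)
  have cSb: "isCont (\<lambda>p. S (L x0 (fst p) (snd (snd p)))) p" by (rule S_comp[OF assms(1,2) cfb]) (use nz p in simp)
  have cQa: "isCont (\<lambda>p. Q x0 (of_real (fst p) * fst (snd p))) p"
    by (rule Q_comp[OF assms(1,2)]) (use nz p in \<open>auto intro!: continuous_intros\<close>)
  have cQb: "isCont (\<lambda>p. Q x0 (of_real (fst p) * snd (snd p))) p"
    by (rule Q_comp[OF assms(1,2)]) (use nz p in \<open>auto intro!: continuous_intros\<close>)
  have cD: "isCont (\<lambda>p. Dd x0 (fst p) (fst (snd p)) (snd (snd p))) p"
    unfolding Dd_def by (intro continuous_intros cQa cQb cWb)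
  show "isCont (\<lambda>p. Phi x0 (fst p) (fst (snd p)) (snd (snd p))) p"
    unfolding Phi_def
    by (intro continuous_intros continuous_Re cWa cWb cSa cSb cD) (use nz p in auto)
qed



lemma dist_pair_t: "dist ((t::real), (a::complex, b::complex)) (0, (a, b)) = \<bar>t\<bar>"
  by (simp add: dist_Pair_Pair)

theorem lemma4p6:
  fixes x0 \<alpha> :: real and N :: nat and C :: "real set" and K :: "complex set"
  assumes "-2 < x0" "x0 < 2" "0 < \<alpha>" "\<alpha> < 1"
    and "compact C" and "compact K" and "K \<subseteq> {z. 0 < Im z}"
  shows "uniform_limit {(c, \<eta>). (\<forall>j<N. c j \<in> C \<and> \<eta> j \<in> K)}
           (\<lambda>n (c, \<eta>). trace_HH (phi_n x0 \<alpha> N c \<eta> n) (tilde (phi_n x0 \<alpha> N c \<eta> n)))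
           (\<lambda>(c, \<eta>). - (1/2) * (\<Sum>i<N. \<Sum>j<N. c i * c j * Re (1 / (\<eta> i - cnj (\<eta> j))\<^sup>2)))
           sequentially"
proof -
  define T where "T = {0..1::real} \<times> (K \<times> K)"
  define Psi where "Psi p = Phi x0 (fst p) (fst (snd p)) (snd (snd p))" for p :: "real \<times> complex \<times> complex"
  have "continuous_on T Psi" unfolding T_def Psi_def by (rule Psi_cont[OF assms(1,2,7)])
  moreover have "compact T" unfolding T_def using assms(6) by (intro compact_Times compact_Icc)
  ultimately have uc: "uniformly_continuous_on T Psi" by (rule compact_uniformly_continuous)
  obtain M0 where M0: "\<And>x. x \<in> C \<Longrightarrow> norm x \<le> M0"
    using compact_imp_bounded[OF assms(5)] unfolding bounded_iff by auto
  define M where "M = \<bar>M0\<bar>"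
  have M: "\<And>x. x \<in> C \<Longrightarrow> \<bar>x\<bar> \<le> M" "M \<ge> 0" using M0 by (force simp: M_def)+
  have tl: "((\<lambda>n. real n powr (-\<alpha>)) \<longlongrightarrow> 0) sequentially"
    by (rule tendsto_neg_powr) (use assms(3) filterlim_real_sequentially in auto)
  show ?thesis unfolding uniform_limit_iff
  proof (intro allI impI)
    fix e :: real assume e: "e > 0"
    define e' where "e' = e / (real N * real N * (M * M) + 1)"
    have den: "real N * real N * (M * M) + 1 > 0" using M(2) by (simp add: add_nonneg_pos)
    have e': "e' > 0" using e den by (simp add: e'_def)
    obtain d where d: "d > 0" "\<And>x x'. x \<in> T \<Longrightarrow> x' \<in> T \<Longrightarrow> dist x' x < d \<Longrightarrow> dist (Psi x') (Psi x) < e'"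
      using uc e' unfolding uniformly_continuous_on_def by metis
    have ev1: "eventually (\<lambda>n. real n powr (-\<alpha>) < d) sequentially"
      using order_tendstoD(2)[OF tl d(1)] .
    have ev2: "eventually (\<lambda>n. n \<ge> (1::nat)) sequentially" by (rule eventually_ge_at_top)
    show "\<forall>\<^sub>F n in sequentially. \<forall>x\<in>{(c, \<eta>). \<forall>j<N. c j \<in> C \<and> \<eta> j \<in> K}.
            dist ((\<lambda>n (c, \<eta>). trace_HH (phi_n x0 \<alpha> N c \<eta> n) (tilde (phi_n x0 \<alpha> N c \<eta> n))) n x)
                 ((\<lambda>(c, \<eta>). - (1/2) * (\<Sum>i<N. \<Sum>j<N. c i * c j * Re (1 / (\<eta> i - cnj (\<eta> j))\<^sup>2))) x) < e"
    proof (rule eventually_mono[OF eventually_conj[OF ev1 ev2]], intro ballI)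
      fix n :: nat and x assume n: "real n powr (-\<alpha>) < d \<and> n \<ge> 1"
        and x: "x \<in> {(c, \<eta>). \<forall>j<N. c j \<in> C \<and> \<eta> j \<in> K}"
      obtain c \<eta> where x_eq: "x = (c, \<eta>)" and cK: "\<And>j. j < N \<Longrightarrow> c j \<in> C \<and> \<eta> j \<in> K"
        using x by auto
      define t where "t = 1 / real n powr \<alpha>"
      have tpos: "t > 0" using n by (simp add: t_def)
      have t1: "t \<le> 1" using n assms(3) by (simp add: t_def ge_one_powr_ge_zero)
      have td: "t < d" using n by (simp add: t_def powr_minus_divide)
      have Im\<eta>: "\<forall>j<N. Im (\<eta> j) > 0" using cK assms(7) by auto
      have tr: "trace_HH (phi_n x0 \<alpha> N c \<eta> n) (tilde (phi_n x0 \<alpha> N c \<eta> n))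
          = (\<Sum>i<N. \<Sum>j<N. c i * c j * Phi x0 t (\<eta> i) (\<eta> j))"
        unfolding t_def by (rule trace_eq[OF assms(1,2)]) (use n Im\<eta> in auto)
      have lim: "- (1/2) * (\<Sum>i<N. \<Sum>j<N. c i * c j * Re (1 / (\<eta> i - cnj (\<eta> j))\<^sup>2))
          = (\<Sum>i<N. \<Sum>j<N. c i * c j * Phi x0 0 (\<eta> i) (\<eta> j))"
        by (simp add: Phi0[OF assms(1,2)] sum_distrib_left mult_ac)
      have bnd: "\<bar>c i * c j * (Phi x0 t (\<eta> i) (\<eta> j) - Phi x0 0 (\<eta> i) (\<eta> j))\<bar> \<le> M * M * e'"
        if ij: "i < N" "j < N" for i j
      proof -
        have inT: "(t, \<eta> i, \<eta> j) \<in> T" "(0, \<eta> i, \<eta> j) \<in> T"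
          using cK ij tpos t1 by (auto simp: T_def)
        have "dist (t, \<eta> i, \<eta> j) (0, \<eta> i, \<eta> j) < d" using td tpos by (simp add: dist_pair_t)
        from d(2)[OF inT(2) inT(1) this]
        have "\<bar>Phi x0 t (\<eta> i) (\<eta> j) - Phi x0 0 (\<eta> i) (\<eta> j)\<bar> < e'"
          by (simp add: Psi_def dist_real_def)
        moreover have "\<bar>c i\<bar> \<le> M" "\<bar>c j\<bar> \<le> M" using M(1) cK ij by auto
        ultimately show ?thesis unfolding abs_mult
          by (intro mult_mono) (auto simp: M(2))
      qed
      have "\<bar>(\<Sum>i<N. \<Sum>j<N. c i * c j * Phi x0 t (\<eta> i) (\<eta> j)) - (\<Sum>i<N. \<Sum>j<N. c i * c j * Phi x0 0 (\<eta> i) (\<eta> j))\<bar>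
          = \<bar>\<Sum>i<N. \<Sum>j<N. c i * c j * (Phi x0 t (\<eta> i) (\<eta> j) - Phi x0 0 (\<eta> i) (\<eta> j))\<bar>"
        by (simp add: sum_subtractf right_diff_distrib)
      also have "\<dots> \<le> (\<Sum>i<N. \<bar>\<Sum>j<N. c i * c j * (Phi x0 t (\<eta> i) (\<eta> j) - Phi x0 0 (\<eta> i) (\<eta> j))\<bar>)"
        by (rule sum_abs)
      also have "\<dots> \<le> (\<Sum>i<N. \<Sum>j<N. \<bar>c i * c j * (Phi x0 t (\<eta> i) (\<eta> j) - Phi x0 0 (\<eta> i) (\<eta> j))\<bar>)"
        by (intro sum_mono sum_abs)
      also have "\<dots> \<le> (\<Sum>i<N. \<Sum>j<N. M * M * e')"
        by (intro sum_mono bnd) auto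
      also have "\<dots> = real N * real N * (M * M) * e'" by simp
      also have "\<dots> < e"
      proof -
        have "real N * real N * (M * M) * e' = e * (real N * real N * (M * M)) / (real N * real N * (M * M) + 1)"
          by (simp add: e'_def)
        also have "\<dots> < e" using e den by (simp add: divide_less_eq)
        finally show ?thesis .
      qed
      finally show "dist ((\<lambda>n (c, \<eta>). trace_HH (phi_n x0 \<alpha> N c \<eta> n) (tilde (phi_n x0 \<alpha> N c \<eta> n))) n x)
                 ((\<lambda>(c, \<eta>). - (1/2) * (\<Sum>i<N. \<Sum>j<N. c i * c j * Re (1 / (\<eta> i - cnj (\<eta> j))\<^sup>2))) x) < e"
        unfolding x_eq by (simp add: dist_real_def tr lim[simplified])
    qed
  qed
qed

end
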